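(* For a generic real $6\times 6$ skew-Hamiltonian matrix $A$ (i.e. for $A$ outside a proper algebraic subset of the space of skew-Hamiltonian matrices), the real vector space of homogeneous polynomials $H$ of degree $3$ in $x_1,\dots,x_6$ satisfying the system of second-order PDEs $A\,\nabla^2H(x)=\nabla^2H(x)\,A^{\rm T}$ (for all $x\in\mathbb R^6$) has dimension $12$.
   Context: $J=\begin{pmatrix}0&I_3\\-I_3&0\end{pmatrix}$. A real $6\times6$ matrix $A$ is skew-Hamiltonian if $A^{\rm T}J=JA$; such matrices form a 15-dimensional vector space. $\nabla^2 H$ denotes the Hesse matrix of $H$. *)

theory Defs
  imports "HOL-Analysis.Analysis" "HOL-Library.Numeral_Type" "HOL-Library.Function_Algebras"
begin

text \<open>Indices of R^6 are the type 6 = {0,...,5}; we use to_nat-free descriptions via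
  the bijection with {0..<6} given by Rep_bit0.\<close>

definition idx :: "6 \<Rightarrow> nat" where "idx i = nat (Rep_bit0 i)"

text \<open>J = [[0, I3], [-I3, 0]] (rows/columns indexed 0..5).\<close>
definition Jmat :: "real^6^6" where
  "Jmat = (\<chi> i j. if idx i < 3 \<and> idx j = idx i + 3 then 1
                 else if 3 \<le> idx i \<and> idx i = idx j + 3 then -1 else 0)"

definition skew_hamiltonian :: "real^6^6 \<Rightarrow> bool" where
  "skew_hamiltonian A \<longleftrightarrow> transpose A ** Jmat = Jmat ** A"

definition partial :: "6 \<Rightarrow> (real^6 \<Rightarrow> real) \<Rightarrow> real^6 \<Rightarrow> real" where
  "partial i H x = deriv (\<lambda>t. H (x + t *\<^sub>R axis i 1)) 0"

definition hesse :: "(real^6 \<Rightarrow> real) \<Rightarrow> real^6 \<Rightarrow> real^6^6" where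
  "hesse H x = (\<chi> i j. partial i (partial j H) x)"

definition homog_cubic :: "(real^6 \<Rightarrow> real) \<Rightarrow> bool" where
  "homog_cubic H \<longleftrightarrow> (\<exists>c :: 6 \<Rightarrow> 6 \<Rightarrow> 6 \<Rightarrow> real.
      H = (\<lambda>x. \<Sum>i\<in>UNIV. \<Sum>j\<in>UNIV. \<Sum>k\<in>UNIV. c i j k * x$i * x$j * x$k))"

definition sol_space :: "real^6^6 \<Rightarrow> (real^6 \<Rightarrow> real) set" where
  "sol_space A = {H. homog_cubic H \<and> (\<forall>x. A ** hesse H x = hesse H x ** transpose A)}"

definition fun_dim :: "(real^6 \<Rightarrow> real) set \<Rightarrow> nat" where
  "fun_dim S = vector_space.dim (\<lambda>c f x. c * f x) S"

inductive matrix_poly :: "(real^6^6 \<Rightarrow> real) \<Rightarrow> bool" where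
  const: "matrix_poly (\<lambda>A. c)"
| entry: "matrix_poly (\<lambda>A. A $ i $ j)"
| add: "matrix_poly p \<Longrightarrow> matrix_poly q \<Longrightarrow> matrix_poly (\<lambda>A. p A + q A)"
| mult: "matrix_poly p \<Longrightarrow> matrix_poly q \<Longrightarrow> matrix_poly (\<lambda>A. p A * q A)"

end

theory Submission
  imports Defs
begin

lemma exhaust_6: fixes x :: 6 shows "x = 0 \<or> x = 1 \<or> x = 2 \<or> x = 3 \<or> x = 4 \<or> x = 5"
proof (induct x)
  case (of_int z)
  then have "z = 0 \<or> z = 1 \<or> z = 2 \<or> z = 3 \<or> z = 4 \<or> z = 5" by fastforce
  then show ?case by auto
qed
lemma UNIV_6: "(UNIV::6 set) = {0,1,2,3,4,5}" using exhaust_6 by auto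
lemma sum_6: "sum f (UNIV::6 set) = f 0 + f 1 + f 2 + f 3 + f 4 + f 5"
  unfolding UNIV_6 by (simp add: ac_simps)
lemma idx_vals[simp]: "idx 0 = 0" "idx 1 = 1" "idx 2 = 2" "idx 3 = 3" "idx 4 = 4" "idx 5 = 5"
  by (simp_all add: idx_def bit0.Rep_numeral bit0.Rep_0 bit0.Rep_1)

lemma Jmat_vals: "Jmat $ i $ j = (if idx i < 3 \<and> idx j = idx i + 3 then 1
                 else if 3 \<le> idx i \<and> idx i = idx j + 3 then -1 else 0)"
  by (simp add: Jmat_def)

lemma skewH_entries:
  assumes "skew_hamiltonian A"
  shows "A$3$3 = A$0$0" "A$3$4 = A$1$0" "A$3$5 = A$2$0"
        "A$4$3 = A$0$1" "A$4$4 = A$1$1" "A$4$5 = A$2$1"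
        "A$5$3 = A$0$2" "A$5$4 = A$1$2" "A$5$5 = A$2$2"
        "A$0$3 = 0" "A$1$4 = 0" "A$2$5 = 0"
        "A$1$3 = - A$0$4" "A$2$3 = - A$0$5" "A$2$4 = - A$1$5"
        "A$3$0 = 0" "A$4$1 = 0" "A$5$2 = 0"
        "A$4$0 = - A$3$1" "A$5$0 = - A$3$2" "A$5$1 = - A$4$2"
proof -
  have E: "\<And>i j. (transpose A ** Jmat) $ i $ j = (Jmat ** A) $ i $ j"
    using assms unfolding skew_hamiltonian_def by simp
  note S = matrix_matrix_mult_def transpose_def Jmat_vals sum_6
  show "A$3$3 = A$0$0" using E[of 0 3] by (simp add: S)
  show "A$3$4 = A$1$0" using E[of 0 4] by (simp add: S)
  show "A$3$5 = A$2$0" using E[of 0 5] by (simp add: S)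
  show "A$4$3 = A$0$1" using E[of 1 3] by (simp add: S)
  show "A$4$4 = A$1$1" using E[of 1 4] by (simp add: S)
  show "A$4$5 = A$2$1" using E[of 1 5] by (simp add: S)
  show "A$5$3 = A$0$2" using E[of 2 3] by (simp add: S)
  show "A$5$4 = A$1$2" using E[of 2 4] by (simp add: S)
  show "A$5$5 = A$2$2" using E[of 2 5] by (simp add: S)
  show "A$0$3 = 0" using E[of 3 3] by (simp add: S)
  show "A$1$4 = 0" using E[of 4 4] by (simp add: S)
  show "A$2$5 = 0" using E[of 5 5] by (simp add: S)
  show "A$1$3 = - A$0$4" using E[of 3 4] by (simp add: S)
  show "A$2$3 = - A$0$5" using E[of 3 5] by (simp add: S)
  show "A$2$4 = - A$1$5" using E[of 4 5] by (simp add: S)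
  show "A$3$0 = 0" using E[of 0 0] by (simp add: S)
  show "A$4$1 = 0" using E[of 1 1] by (simp add: S)
  show "A$5$2 = 0" using E[of 2 2] by (simp add: S)
  show "A$4$0 = - A$3$1" using E[of 0 1] by (simp add: S)
  show "A$5$0 = - A$3$2" using E[of 0 2] by (simp add: S)
  show "A$5$1 = - A$4$2" using E[of 1 2] by (simp add: S)
qed

definition e1 :: "real^6^6 \<Rightarrow> real" where "e1 A = A$0$0 + A$1$1 + A$2$2"
definition e2 :: "real^6^6 \<Rightarrow> real" where "e2 A = A$0$4*A$3$1 + A$0$5*A$3$2 + A$1$5*A$4$2
  + A$0$0*A$1$1 + A$0$0*A$2$2 - A$0$1*A$1$0 - A$0$2*A$2$0 + A$1$1*A$2$2 - A$1$2*A$2$1"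
definition e3 :: "real^6^6 \<Rightarrow> real" where "e3 A =
  A$0$4*A$3$1*A$2$2 - A$0$4*A$3$2*A$2$1 + A$0$4*A$4$2*A$2$0 - A$0$5*A$3$1*A$1$2 + A$0$5*A$3$2*A$1$1
  - A$0$5*A$4$2*A$1$0 + A$1$5*A$3$1*A$0$2 - A$1$5*A$3$2*A$0$1 + A$1$5*A$4$2*A$0$0
  + A$0$0*A$1$1*A$2$2 - A$0$0*A$1$2*A$2$1 - A$0$1*A$1$0*A$2$2 + A$0$1*A$1$2*A$2$0
  + A$0$2*A$1$0*A$2$1 - A$0$2*A$1$1*A$2$0"


lemma forall_6: "(\<forall>i::6. P i) \<longleftrightarrow> P 0 \<and> P 1 \<and> P 2 \<and> P 3 \<and> P 4 \<and> P 5"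
  by (metis exhaust_6)

lemma six_neq[simp]: "(0::6) \<noteq> 1" "(0::6) \<noteq> 2" "(0::6) \<noteq> 3" "(0::6) \<noteq> 4" "(0::6) \<noteq> 5"
  "(1::6) \<noteq> 2" "(1::6) \<noteq> 3" "(1::6) \<noteq> 4" "(1::6) \<noteq> 5"
  "(2::6) \<noteq> 3" "(2::6) \<noteq> 4" "(2::6) \<noteq> 5" "(3::6) \<noteq> 4" "(3::6) \<noteq> 5" "(4::6) \<noteq> 5"
  "(1::6) \<noteq> 0" "(2::6) \<noteq> 0" "(3::6) \<noteq> 0" "(4::6) \<noteq> 0" "(5::6) \<noteq> 0"
  "(2::6) \<noteq> 1" "(3::6) \<noteq> 1" "(4::6) \<noteq> 1" "(5::6) \<noteq> 1"
  "(3::6) \<noteq> 2" "(4::6) \<noteq> 2" "(5::6) \<noteq> 2" "(4::6) \<noteq> 3" "(5::6) \<noteq> 3" "(5::6) \<noteq> 4"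
  by (metis idx_vals numeral_eq_iff zero_neq_numeral one_neq_zero numeral_One semiring_norm n_not_Suc_n nat.simps(3) zero_neq_one)+

lemma cubic_mat:
  assumes "skew_hamiltonian A"
  shows "A ** A ** A = e1 A *\<^sub>R (A ** A) - e2 A *\<^sub>R A + e3 A *\<^sub>R mat 1"
  using skewH_entries[OF assms]
  unfolding vec_eq_iff forall_6
  by (simp add: matrix_matrix_mult_def mat_def sum_6 e1_def e2_def e3_def algebra_simps)


definition tri :: "(6 \<Rightarrow> 6 \<Rightarrow> 6 \<Rightarrow> real) \<Rightarrow> real^6 \<Rightarrow> real^6 \<Rightarrow> real^6 \<Rightarrow> real" where
  "tri c u v w = (\<Sum>i\<in>UNIV. \<Sum>j\<in>UNIV. \<Sum>k\<in>UNIV. c i j k * u$i * v$j * w$k)"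

definition symt :: "(6 \<Rightarrow> 6 \<Rightarrow> 6 \<Rightarrow> real) \<Rightarrow> 6 \<Rightarrow> 6 \<Rightarrow> 6 \<Rightarrow> real" where
  "symt c i j k = c i j k + c i k j + c j i k + c j k i + c k i j + c k j i"

lemma homog_cubic_iff: "homog_cubic H \<longleftrightarrow> (\<exists>c. H = (\<lambda>x. tri c x x x))"
  by (simp add: homog_cubic_def tri_def)

lemma tri_add1: "tri c (u + u') v w = tri c u v w + tri c u' v w"
  by (simp add: tri_def sum.distrib[symmetric] algebra_simps)
lemma tri_add2: "tri c u (v + v') w = tri c u v w + tri c u v' w"
  by (simp add: tri_def sum.distrib[symmetric] algebra_simps)
lemma tri_add3: "tri c u v (w + w') = tri c u v w + tri c u v w'"
  by (simp add: tri_def sum.distrib[symmetric] algebra_simps)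
lemma tri_scale1: "tri c (a *\<^sub>R u) v w = a * tri c u v w"
  by (simp add: tri_def sum_distrib_left algebra_simps)
lemma tri_scale2: "tri c u (a *\<^sub>R v) w = a * tri c u v w"
  by (simp add: tri_def sum_distrib_left algebra_simps)
lemma tri_scale3: "tri c u v (a *\<^sub>R w) = a * tri c u v w"
  by (simp add: tri_def sum_distrib_left algebra_simps)

lemma S3_132: "(\<Sum>i\<in>A. \<Sum>j\<in>B. \<Sum>k\<in>C. f i j k) = (\<Sum>i\<in>A. \<Sum>k\<in>C. \<Sum>j\<in>B. f i j k)"
  by (rule sum.cong[OF refl], rule sum.swap)
lemma S3_213: "(\<Sum>i\<in>A. \<Sum>j\<in>B. \<Sum>k\<in>C. f i j k) = (\<Sum>j\<in>B. \<Sum>i\<in>A. \<Sum>k\<in>C. f i j k)"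
  by (rule sum.swap)
lemma S3_231: "(\<Sum>i\<in>A. \<Sum>j\<in>B. \<Sum>k\<in>C. f i j k) = (\<Sum>j\<in>B. \<Sum>k\<in>C. \<Sum>i\<in>A. f i j k)"
proof -
  have "(\<Sum>i\<in>A. \<Sum>j\<in>B. \<Sum>k\<in>C. f i j k) = (\<Sum>j\<in>B. \<Sum>i\<in>A. \<Sum>k\<in>C. f i j k)" by (rule S3_213)
  also have "\<dots> = (\<Sum>j\<in>B. \<Sum>k\<in>C. \<Sum>i\<in>A. f i j k)" by (rule sum.cong[OF refl], rule sum.swap)
  finally show ?thesis .
qed
lemma S3_312: "(\<Sum>i\<in>A. \<Sum>j\<in>B. \<Sum>k\<in>C. f i j k) = (\<Sum>k\<in>C. \<Sum>i\<in>A. \<Sum>j\<in>B. f i j k)"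
proof -
  have "(\<Sum>i\<in>A. \<Sum>j\<in>B. \<Sum>k\<in>C. f i j k) = (\<Sum>i\<in>A. \<Sum>k\<in>C. \<Sum>j\<in>B. f i j k)" by (rule S3_132)
  also have "\<dots> = (\<Sum>k\<in>C. \<Sum>i\<in>A. \<Sum>j\<in>B. f i j k)" by (rule sum.swap)
  finally show ?thesis .
qed
lemma S3_321: "(\<Sum>i\<in>A. \<Sum>j\<in>B. \<Sum>k\<in>C. f i j k) = (\<Sum>k\<in>C. \<Sum>j\<in>B. \<Sum>i\<in>A. f i j k)"
proof -
  have "(\<Sum>i\<in>A. \<Sum>j\<in>B. \<Sum>k\<in>C. f i j k) = (\<Sum>k\<in>C. \<Sum>i\<in>A. \<Sum>j\<in>B. f i j k)" by (rule S3_312)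
  also have "\<dots> = (\<Sum>k\<in>C. \<Sum>j\<in>B. \<Sum>i\<in>A. f i j k)" by (rule sum.cong[OF refl], rule sum.swap)
  finally show ?thesis .
qed

lemma tri_perm:
  "tri (\<lambda>i j k. c i k j) u v w = tri c u w v"
  "tri (\<lambda>i j k. c j i k) u v w = tri c v u w"
  "tri (\<lambda>i j k. c j k i) u v w = tri c v w u"
  "tri (\<lambda>i j k. c k i j) u v w = tri c w u v"
  "tri (\<lambda>i j k. c k j i) u v w = tri c w v u"
  unfolding tri_def
  by (rule trans[OF S3_132], simp add: mult_ac, rule trans[OF S3_213], simp add: mult_ac,
      rule trans[OF S3_231], simp add: mult_ac, rule trans[OF S3_312], simp add: mult_ac,
      rule trans[OF S3_321], simp add: mult_ac)

lemma tri_plus_tensor: "tri (\<lambda>i j k. c i j k + d i j k) u v w = tri c u v w + tri d u v w"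
  by (simp add: tri_def sum.distrib[symmetric] algebra_simps)

lemma tri_symt: "tri (symt c) u v w = tri c u v w + tri c u w v + tri c v u w + tri c v w u + tri c w u v + tri c w v u"
proof -
  have E: "symt c = (\<lambda>i j k. c i j k + c i k j + c j i k + c j k i + c k i j + c k j i)"
    by (simp add: symt_def fun_eq_iff)
  have X: "tri (symt c) u v w = tri c u v w + tri (\<lambda>i j k. c i k j) u v w + tri (\<lambda>i j k. c j i k) u v w
     + tri (\<lambda>i j k. c j k i) u v w + tri (\<lambda>i j k. c k i j) u v w + tri (\<lambda>i j k. c k j i) u v w"
    by (simp only: E tri_plus_tensor)
  show ?thesis using X tri_perm[of c u v w] by linarith
qed

lemma tri_axis: "tri c (axis i 1) (axis j 1) w = (\<Sum>k\<in>UNIV. c i j k * w$k)"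
proof -
  have E: "\<And>ia ja. (\<Sum>k\<in>UNIV. c ia ja k * axis i 1 $ ia * axis j (1::real) $ ja * w $ k) =
     (if ja = j then (if ia = i then (\<Sum>k\<in>UNIV. c i j k * w$k) else 0) else 0)"
    by (simp add: axis_def)
  show ?thesis unfolding tri_def by (simp only: E) (simp add: sum.delta)
qed

lemma poly3_deriv: "deriv (\<lambda>t::real. p0 + t*p1 + t^2*p2 + t^3*p3) 0 = p1"
  by (rule DERIV_imp_deriv) (auto intro!: derivative_eq_intros)

lemma poly2_deriv: "deriv (\<lambda>t::real. p0 + t*p1 + t^2*p2) 0 = p1"
  by (rule DERIV_imp_deriv) (auto intro!: derivative_eq_intros)

lemma partial1_expand:
  fixes a y :: "real^6"
  shows "(\<lambda>t. tri c (y + t *\<^sub>R a) (y + t *\<^sub>R a) (y + t *\<^sub>R a)) =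
    (\<lambda>t. tri c y y y + t * (tri c a y y + tri c y a y + tri c y y a)
        + t^2 * (tri c a a y + tri c a y a + tri c y a a) + t^3 * tri c a a a)"
    by (simp add: tri_add1 tri_add2 tri_add3 tri_scale1 tri_scale2 tri_scale3 fun_eq_iff
        algebra_simps power2_eq_square power3_eq_cube)

lemma partial1: "partial j (\<lambda>x. tri c x x x) y = tri c (axis j 1) y y + tri c y (axis j 1) y + tri c y y (axis j 1)"
  unfolding partial_def partial1_expand by (rule poly3_deriv)

lemma partial2_expand:
  fixes a b x :: "real^6"
  shows "(\<lambda>t. tri c b (x + t *\<^sub>R a) (x + t *\<^sub>R a) + tri c (x + t *\<^sub>R a) b (x + t *\<^sub>R a)
          + tri c (x + t *\<^sub>R a) (x + t *\<^sub>R a) b) =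
    (\<lambda>t. (tri c b x x + tri c x b x + tri c x x b)
      + t * (tri c b a x + tri c b x a + tri c a b x + tri c x b a + tri c a x b + tri c x a b)
      + t^2 * (tri c b a a + tri c a b a + tri c a a b))"
  by (simp add: tri_add1 tri_add2 tri_add3 tri_scale1 tri_scale2 tri_scale3 fun_eq_iff
        algebra_simps power2_eq_square)

lemma partial2:
  "partial i (partial j (\<lambda>x. tri c x x x)) x =
     tri c (axis j 1) (axis i 1) x + tri c (axis j 1) x (axis i 1) + tri c (axis i 1) (axis j 1) x
   + tri c x (axis j 1) (axis i 1) + tri c (axis i 1) x (axis j 1) + tri c x (axis i 1) (axis j 1)"
proof -
  have P: "partial j (\<lambda>x. tri c x x x) = (\<lambda>y. tri c (axis j 1) y y + tri c y (axis j 1) y + tri c y y (axis j 1))"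
    by (simp add: fun_eq_iff partial1)
  show ?thesis
    unfolding P partial_def partial2_expand by (rule poly2_deriv)
qed

lemma hesse_cub: "hesse (\<lambda>x. tri c x x x) x $ i $ j = tri (symt c) (axis i 1) (axis j 1) x"
  unfolding hesse_def vec_lambda_beta partial2 tri_symt by linarith


definition act :: "real^6^6 \<Rightarrow> real^6 \<Rightarrow> real^6" where "act A u = u v* A"

lemma act_comp: "act A u $ l = (\<Sum>i\<in>UNIV. A$i$l * u$i)"
  by (simp add: act_def vector_matrix_mult_def mult.commute)

definition CC :: "real^6^6 \<Rightarrow> (6 \<Rightarrow> 6 \<Rightarrow> 6 \<Rightarrow> real) \<Rightarrow> bool" where
  "CC A s \<longleftrightarrow> (\<forall>i j k. (\<Sum>l\<in>UNIV. A$i$l * s l j k) = (\<Sum>l\<in>UNIV. A$j$l * s i l k))"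

lemma sum_axis: "(\<Sum>k'\<in>UNIV. f k' * axis k (1::real) $ k') = f k"
proof -
  have "\<And>k'. f k' * axis k (1::real) $ k' = (if k' = k then f k else 0)" by (simp add: axis_def)
  then show ?thesis by (simp add: sum.delta')
qed

lemma sum_axis': "(\<Sum>k'\<in>UNIV. axis k (1::real) $ k' * f k') = f k"
  using sum_axis[of f k] by (simp add: mult.commute)

lemma tri_axis3: "tri c (axis i 1) (axis j 1) (axis k 1) = c i j k"
  by (simp add: tri_axis sum_axis)

lemma hesse_entry: "hesse (\<lambda>x. tri c x x x) x $ i $ j = (\<Sum>k\<in>UNIV. symt c i j k * x$k)"
  by (simp add: hesse_cub tri_axis)

lemma swap_inner: "(\<Sum>l\<in>A. (a l::real) * (\<Sum>k\<in>B. b l k)) = (\<Sum>k\<in>B. \<Sum>l\<in>A. a l * b l k)"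
  unfolding sum_distrib_left by (rule sum.swap)

lemma hesse_cond_iff:
  "(\<forall>x. A ** hesse (\<lambda>x. tri c x x x) x = hesse (\<lambda>x. tri c x x x) x ** transpose A) \<longleftrightarrow> CC A (symt c)"
proof
  assume H: "\<forall>x. A ** hesse (\<lambda>x. tri c x x x) x = hesse (\<lambda>x. tri c x x x) x ** transpose A"
  show "CC A (symt c)" unfolding CC_def
  proof (intro allI)
    fix i j k
    have "(A ** hesse (\<lambda>x. tri c x x x) (axis k 1)) $ i $ j = (hesse (\<lambda>x. tri c x x x) (axis k 1) ** transpose A) $ i $ j"
      using H by simp
    then show "(\<Sum>l\<in>UNIV. A$i$l * symt c l j k) = (\<Sum>l\<in>UNIV. A$j$l * symt c i l k)"
      by (simp add: matrix_matrix_mult_def hesse_entry sum_axis sum_axis' transpose_def mult.commute)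
  qed
next
  assume C: "CC A (symt c)"
  show "\<forall>x. A ** hesse (\<lambda>x. tri c x x x) x = hesse (\<lambda>x. tri c x x x) x ** transpose A"
  proof (intro allI)
    fix x
    show "A ** hesse (\<lambda>x. tri c x x x) x = hesse (\<lambda>x. tri c x x x) x ** transpose A"
    proof (simp add: vec_eq_iff, intro allI)
      fix i j
      have "(A ** hesse (\<lambda>x. tri c x x x) x) $ i $ j = (\<Sum>l\<in>UNIV. A$i$l * (\<Sum>k\<in>UNIV. symt c l j k * x$k))"
        by (simp add: matrix_matrix_mult_def hesse_entry)
      also have "\<dots> = (\<Sum>k\<in>UNIV. \<Sum>l\<in>UNIV. A$i$l * (symt c l j k * x$k))" by (rule swap_inner)
      also have "\<dots> = (\<Sum>k\<in>UNIV. (\<Sum>l\<in>UNIV. A$i$l * symt c l j k) * x$k)"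
        by (simp add: sum_distrib_right mult.assoc)
      also have "\<dots> = (\<Sum>k\<in>UNIV. (\<Sum>l\<in>UNIV. A$j$l * symt c i l k) * x$k)"
        using C unfolding CC_def by simp
      also have "\<dots> = (\<Sum>k\<in>UNIV. \<Sum>l\<in>UNIV. A$j$l * (symt c i l k * x$k))"
        by (simp add: sum_distrib_right mult.assoc)
      also have "\<dots> = (\<Sum>l\<in>UNIV. A$j$l * (\<Sum>k\<in>UNIV. symt c i l k * x$k))" by (rule swap_inner[symmetric])
      also have "\<dots> = (hesse (\<lambda>x. tri c x x x) x ** transpose A) $ i $ j"
        by (simp add: matrix_matrix_mult_def hesse_entry transpose_def mult.commute)
      finally show "(A ** hesse (\<lambda>x. tri c x x x) x) $ i $ j = (hesse (\<lambda>x. tri c x x x) x ** transpose A) $ i $ j" .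
    qed
  qed
qed

lemma tri_act1: "tri s (act A u) v w = tri (\<lambda>i j k. \<Sum>l\<in>UNIV. A$i$l * s l j k) u v w"
proof -
  have "tri s (act A u) v w = (\<Sum>l\<in>UNIV. \<Sum>j\<in>UNIV. \<Sum>k\<in>UNIV. \<Sum>i\<in>UNIV. s l j k * (A$i$l * u$i) * v$j * w$k)"
    by (simp add: tri_def act_comp sum_distrib_left sum_distrib_right)
  also have "\<dots> = (\<Sum>l\<in>UNIV. \<Sum>i\<in>UNIV. \<Sum>j\<in>UNIV. \<Sum>k\<in>UNIV. s l j k * (A$i$l * u$i) * v$j * w$k)"
    by (rule sum.cong[OF refl], rule S3_312)
  also have "\<dots> = (\<Sum>i\<in>UNIV. \<Sum>l\<in>UNIV. \<Sum>j\<in>UNIV. \<Sum>k\<in>UNIV. s l j k * (A$i$l * u$i) * v$j * w$k)"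
    by (rule sum.swap)
  also have "\<dots> = (\<Sum>i\<in>UNIV. \<Sum>j\<in>UNIV. \<Sum>k\<in>UNIV. \<Sum>l\<in>UNIV. s l j k * (A$i$l * u$i) * v$j * w$k)"
    by (rule sum.cong[OF refl], rule S3_231)
  also have "\<dots> = tri (\<lambda>i j k. \<Sum>l\<in>UNIV. A$i$l * s l j k) u v w"
    unfolding tri_def by (simp add: sum_distrib_left sum_distrib_right mult_ac)
  finally show ?thesis .
qed

lemma tri_act2: "tri s u (act A v) w = tri (\<lambda>i j k. \<Sum>l\<in>UNIV. A$j$l * s i l k) u v w"
proof -
  have "tri s u (act A v) w = (\<Sum>i\<in>UNIV. \<Sum>l\<in>UNIV. \<Sum>k\<in>UNIV. \<Sum>j\<in>UNIV. s i l k * u$i * (A$j$l * v$j) * w$k)"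
    by (simp add: tri_def act_comp sum_distrib_left sum_distrib_right)
  also have "\<dots> = (\<Sum>i\<in>UNIV. \<Sum>j\<in>UNIV. \<Sum>k\<in>UNIV. \<Sum>l\<in>UNIV. s i l k * u$i * (A$j$l * v$j) * w$k)"
    by (rule sum.cong[OF refl], rule S3_321)
  also have "\<dots> = tri (\<lambda>i j k. \<Sum>l\<in>UNIV. A$j$l * s i l k) u v w"
    unfolding tri_def by (simp add: sum_distrib_left sum_distrib_right mult_ac)
  finally show ?thesis .
qed

lemma CC_tri: "CC A s \<Longrightarrow> tri s (act A u) v w = tri s u (act A v) w"
  unfolding tri_act1 tri_act2 CC_def by simp

lemma tri_CC: "(\<And>u v w. tri s (act A u) v w = tri s u (act A v) w) \<Longrightarrow> CC A s"
  unfolding CC_def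
proof (intro allI)
  fix i j k
  assume H: "\<And>u v w. tri s (act A u) v w = tri s u (act A v) w"
  show "(\<Sum>l\<in>UNIV. A$i$l * s l j k) = (\<Sum>l\<in>UNIV. A$j$l * s i l k)"
    using H[of "axis i 1" "axis j 1" "axis k 1"] unfolding tri_act1 tri_act2 tri_axis3 .
qed

lemma tri_symt_sym:
  "tri (symt c) u v w = tri (symt c) v u w"
  "tri (symt c) u v w = tri (symt c) u w v"
  "tri (symt c) u v w = tri (symt c) w v u"
  using tri_symt[of c u v w] tri_symt[of c v u w] tri_symt[of c u w v] tri_symt[of c w v u] by linarith+

lemma tri_act3:
  assumes "CC A (symt c)"
  shows "tri (symt c) (act A u) v w = tri (symt c) u v (act A w)"
proof -
  have "tri (symt c) (act A u) v w = tri (symt c) (act A u) w v" by (rule tri_symt_sym(2))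
  also have "\<dots> = tri (symt c) u (act A w) v" by (rule CC_tri[OF assms])
  also have "\<dots> = tri (symt c) u v (act A w)" by (rule tri_symt_sym(2))
  finally show ?thesis .
qed


definition pw :: "real^6^6 \<Rightarrow> nat \<Rightarrow> real^6 \<Rightarrow> real^6" where "pw A m u = (act A ^^ m) u"
definition evec :: "nat \<Rightarrow> real^6" where "evec p = (if p = 0 then axis 0 1 else axis 3 1)"
definition Kmat :: "real^6^6 \<Rightarrow> real^6^6" where
  "Kmat A = (\<chi> i j. pw A (idx j mod 3) (evec (idx j div 3)) $ i)"
definition ix :: "nat \<Rightarrow> nat \<Rightarrow> 6" where
  "ix p r = (if p = 0 then (if r = 0 then 0 else if r = 1 then 1 else 2)
             else (if r = 0 then 3 else if r = 1 then 4 else 5))"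

lemma pw_0[simp]: "pw A 0 u = u" by (simp add: pw_def)
lemma pw_Suc: "pw A (Suc m) u = act A (pw A m u)" by (simp add: pw_def)
lemma pw_Suc': "pw A (Suc m) u = pw A m (act A u)" by (simp add: pw_def funpow_swap1)
lemma pw_add: "pw A (m + n) u = pw A m (pw A n u)" by (simp add: pw_def funpow_add)

lemma act_add: "act A (u + v) = act A u + act A v" by (simp add: act_def vector_matrix_left_distrib)
lemma act_scale: "act A (c *\<^sub>R u) = c *\<^sub>R act A u" by (simp add: act_def scaleR_vector_matrix_assoc)
lemma act_zero: "act A 0 = 0" by (simp add: act_def)
lemma act_sum: "act A (\<Sum>i\<in>S. f i) = (\<Sum>i\<in>S. act A (f i))"
  by (induct S rule: infinite_finite_induct) (simp_all add: act_zero act_add)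

lemma cubic_act:
  assumes "skew_hamiltonian A"
  shows "act A (act A (act A u)) = e3 A *\<^sub>R u + (- e2 A) *\<^sub>R act A u + e1 A *\<^sub>R act A (act A u)"
proof -
  have "act A (act A (act A u)) = u v* (A ** A ** A)"
    by (simp add: act_def vector_matrix_mul_assoc)
  also have "\<dots> = u v* (e1 A *\<^sub>R (A ** A) - e2 A *\<^sub>R A + e3 A *\<^sub>R mat 1)"
    by (simp add: cubic_mat[OF assms])
  also have "\<dots> = e1 A *\<^sub>R (u v* (A ** A)) - e2 A *\<^sub>R (u v* A) + e3 A *\<^sub>R u"
    by (simp add: vector_matrix_mult_add_rdistrib vector_matrix_mult_diff_rdistrib vector_scaleR_matrix_ac)
  also have "\<dots> = e3 A *\<^sub>R u + (- e2 A) *\<^sub>R act A u + e1 A *\<^sub>R act A (act A u)"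
    by (simp add: act_def vector_matrix_mul_assoc algebra_simps)
  finally show ?thesis .
qed

lemma sum2: "(\<Sum>p<2. f p) = f 0 + f (1::nat)" by (simp add: numeral_2_eq_2)
lemma sum3: "(\<Sum>p<3. f p) = f 0 + f 1 + f (2::nat)" by (simp add: numeral_3_eq_3 numeral_2_eq_2)

lemma lt2: "p < (2::nat) \<Longrightarrow> p = 0 \<or> p = 1" by auto
lemma lt3: "p < (3::nat) \<Longrightarrow> p = 0 \<or> p = 1 \<or> p = 2" by auto

lemma ix_inj: "p < 2 \<Longrightarrow> q < 2 \<Longrightarrow> r < 3 \<Longrightarrow> s < 3 \<Longrightarrow> (ix q s = ix p r) \<longleftrightarrow> (q = p \<and> s = r)"
  by (auto dest!: lt2 lt3 simp: ix_def)

lemma ix_surj: "\<exists>p r. p < 2 \<and> r < 3 \<and> j = ix p r"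
  using exhaust_6[of j]
  by (elim disjE) (rule exI[of _ 0], rule exI[of _ 0], simp add: ix_def,
     rule exI[of _ 0], rule exI[of _ 1], simp add: ix_def,
     rule exI[of _ 0], rule exI[of _ 2], simp add: ix_def,
     rule exI[of _ 1], rule exI[of _ 0], simp add: ix_def,
     rule exI[of _ 1], rule exI[of _ 1], simp add: ix_def,
     rule exI[of _ 1], rule exI[of _ 2], simp add: ix_def)

lemma sum6_pr: "(\<Sum>j\<in>UNIV. f j) = (\<Sum>p<2. \<Sum>r<3. f (ix p r))"
  by (simp add: sum_6 sum2 sum3 ix_def add_ac)

lemma idx_ix: "p < 2 \<Longrightarrow> r < 3 \<Longrightarrow> idx (ix p r) mod 3 = r \<and> idx (ix p r) div 3 = p"
  by (auto dest!: lt2 lt3 simp: ix_def)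

lemma Kmat_col: "p < 2 \<Longrightarrow> r < 3 \<Longrightarrow> column (ix p r) (Kmat A) = pw A r (evec p)"
  by (simp add: column_def Kmat_def idx_ix vec_eq_iff)

lemma Kmat_axis: "p < 2 \<Longrightarrow> r < 3 \<Longrightarrow> Kmat A *v axis (ix p r) 1 = pw A r (evec p)"
proof -
  assume a: "p < 2" "r < 3"
  have "Kmat A *v axis (ix p r) 1 = column (ix p r) (Kmat A)"
    by (simp add: vec_eq_iff matrix_vector_mult_def column_def sum_axis)
  then show ?thesis using Kmat_col[OF a] by simp
qed

fun gm :: "real \<Rightarrow> real \<Rightarrow> real \<Rightarrow> nat \<Rightarrow> nat \<Rightarrow> real" where
  "gm a0 a1 a2 n 0 = (if n = 0 then 1 else 0)"
| "gm a0 a1 a2 n (Suc 0) = (if n = 1 then 1 else 0)"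
| "gm a0 a1 a2 n (Suc (Suc 0)) = (if n = 2 then 1 else 0)"
| "gm a0 a1 a2 n (Suc (Suc (Suc m))) = a0 * gm a0 a1 a2 n m + a1 * gm a0 a1 a2 n (Suc m) + a2 * gm a0 a1 a2 n (Suc (Suc m))"

lemmas gm_1 = gm.simps(2)[folded One_nat_def]
lemmas gm_2 = gm.simps(3)[folded numeral_2_eq_2]
lemma gm_3: "gm a0 a1 a2 n (m + 3) = a0 * gm a0 a1 a2 n m + a1 * gm a0 a1 a2 n (m + 1) + a2 * gm a0 a1 a2 n (m + 2)"
proof -
  have "m + 3 = Suc (Suc (Suc m))" "m + 1 = Suc m" "m + 2 = Suc (Suc m)" by simp_all
  then show ?thesis by (simp only: gm.simps(4))
qed

lemma gm_small: "n < 3 \<Longrightarrow> m < 3 \<Longrightarrow> gm a0 a1 a2 n m = (if n = m then 1 else 0)"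
  apply (drule lt3)+
  apply (elim disjE)
  by (simp_all only: gm.simps(1) gm_1 gm_2)

locale kry =
  fixes A :: "real^6^6"
  assumes sh: "skew_hamiltonian A" and nz: "det (Kmat A) \<noteq> 0"
begin

definition Ki where "Ki = (SOME B. B ** Kmat A = mat 1)"

lemma Ki_left: "Ki ** Kmat A = mat 1"
proof -
  have "invertible (Kmat A)" using nz invertible_det_nz by blast
  then have "\<exists>B. B ** Kmat A = mat 1" using invertible_left_inverse by blast
  then show ?thesis unfolding Ki_def by (rule someI_ex)
qed

lemma Ki_right: "Kmat A ** Ki = mat 1"
  using Ki_left matrix_left_right_inverse by blast

abbreviation a0 where "a0 \<equiv> e3 A"
abbreviation a1 where "a1 \<equiv> - e2 A"
abbreviation a2 where "a2 \<equiv> e1 A"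
abbreviation g where "g \<equiv> gm a0 a1 a2"

definition co :: "nat \<Rightarrow> real^6 \<Rightarrow> nat \<Rightarrow> real" where "co p u r = (Ki *v u) $ ix p r"

lemma co_add: "co p (u + v) r = co p u r + co p v r"
  by (simp add: co_def matrix_vector_right_distrib)
lemma co_scale: "co p (c *\<^sub>R u) r = c * co p u r"
  by (simp add: co_def matrix_vector_mult_scaleR)
lemma co_zero: "co p 0 r = 0" by (simp add: co_def)
lemma co_sum: "co p (\<Sum>i\<in>S. f i) r = (\<Sum>i\<in>S. co p (f i) r)"
  by (induct S rule: infinite_finite_induct) (simp_all add: co_zero co_add)

lemma co_basis: "p < 2 \<Longrightarrow> q < 2 \<Longrightarrow> r < 3 \<Longrightarrow> s < 3 \<Longrightarrow>
   co q (pw A r (evec p)) s = (if q = p then (if s = r then 1 else 0) else 0)"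
proof -
  assume a: "p < 2" "q < 2" "r < 3" "s < 3"
  have "Ki *v pw A r (evec p) = axis (ix p r) 1"
    using Kmat_axis[OF a(1,3), of A] by (metis Ki_left matrix_vector_mul_assoc matrix_vector_mul_lid)
  then show ?thesis using ix_inj[OF a] by (simp add: co_def axis_def)
qed

lemma co_diff: "co p (u - v) r = co p u r - co p v r"
  by (simp add: co_def matrix_vector_mult_diff_distrib)
lemma co_uminus: "co p (- u) r = - co p u r"
  using co_scale[of p "-1" u r] by simp

lemma co_evec: "p < 2 \<Longrightarrow> q < 2 \<Longrightarrow> s < 3 \<Longrightarrow>
   co q (evec p) s = (if q = p then (if s = 0 then 1 else 0) else 0)"
  using co_basis[of p q 0 s] by simp

lemma expand: "u = (\<Sum>p<2. \<Sum>r<3. co p u r *\<^sub>R pw A r (evec p))"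
proof -
  have "u = Kmat A *v (Ki *v u)" by (simp add: matrix_vector_mul_assoc Ki_right)
  also have "\<dots> = (\<Sum>j\<in>UNIV. (Ki *v u) $ j *s column j (Kmat A))" by (rule matrix_mult_sum)
  also have "\<dots> = (\<Sum>p<2. \<Sum>r<3. co p u r *\<^sub>R pw A r (evec p))"
    by (simp add: sum6_pr co_def Kmat_col scalar_mult_eq_scaleR)
  finally show ?thesis .
qed

lemma pw3: "pw A 3 u = a0 *\<^sub>R u + a1 *\<^sub>R pw A 1 u + a2 *\<^sub>R pw A 2 u"
  using cubic_act[OF sh, of u] by (simp add: numeral_3_eq_3 numeral_2_eq_2 pw_Suc)

lemma act_expand: "act A u = (\<Sum>p<2. co p u 0 *\<^sub>R pw A 1 (evec p) + co p u 1 *\<^sub>R pw A 2 (evec p)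
    + co p u 2 *\<^sub>R (a0 *\<^sub>R evec p + a1 *\<^sub>R pw A 1 (evec p) + a2 *\<^sub>R pw A 2 (evec p)))"
proof -
  have "act A u = act A (\<Sum>p<2. \<Sum>r<3. co p u r *\<^sub>R pw A r (evec p))" using expand by metis
  also have "\<dots> = (\<Sum>p<2. \<Sum>r<3. co p u r *\<^sub>R pw A (Suc r) (evec p))"
    by (simp add: act_sum act_scale pw_Suc)
  also have "\<dots> = (\<Sum>p<2. co p u 0 *\<^sub>R pw A 1 (evec p) + co p u 1 *\<^sub>R pw A 2 (evec p)
    + co p u 2 *\<^sub>R (a0 *\<^sub>R evec p + a1 *\<^sub>R pw A 1 (evec p) + a2 *\<^sub>R pw A 2 (evec p)))"
    using pw3 by (simp add: sum3 numeral_3_eq_3 numeral_2_eq_2)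
  finally show ?thesis .
qed

lemma shift:
  assumes q: "q < 2"
  shows "co q (act A u) 0 = a0 * co q u 2"
    "co q (act A u) 1 = co q u 0 + a1 * co q u 2"
    "co q (act A u) 2 = co q u 1 + a2 * co q u 2"
  using lt2[OF q]
  by (auto simp: act_expand co_sum co_add co_diff co_uminus co_scale co_basis co_evec sum2)
end


lemma tri_zero1: "tri c 0 v w = 0" by (simp add: tri_def)
lemma tri_zero2: "tri c u 0 w = 0" by (simp add: tri_def)
lemma tri_zero3: "tri c u v 0 = 0" by (simp add: tri_def)

lemma tri_sum1: "tri c (\<Sum>i\<in>S. f i) v w = (\<Sum>i\<in>S. tri c (f i) v w)"
  by (induct S rule: infinite_finite_induct) (simp_all add: tri_zero1 tri_add1)
lemma tri_sum2: "tri c u (\<Sum>i\<in>S. f i) w = (\<Sum>i\<in>S. tri c u (f i) w)"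
  by (induct S rule: infinite_finite_induct) (simp_all add: tri_zero2 tri_add2)
lemma tri_sum3: "tri c u v (\<Sum>i\<in>S. f i) = (\<Sum>i\<in>S. tri c u v (f i))"
  by (induct S rule: infinite_finite_induct) (simp_all add: tri_zero3 tri_add3)

lemma tri_change:
  "tri s (M *v a) (M *v b) (M *v d) = tri (\<lambda>i j k. tri s (column i M) (column j M) (column k M)) a b d"
proof -
  have "tri s (M *v a) (M *v b) (M *v d) =
     (\<Sum>k\<in>UNIV. \<Sum>j\<in>UNIV. \<Sum>i\<in>UNIV. a$i * (b$j * (d$k * tri s (column i M) (column j M) (column k M))))"
    by (simp add: matrix_mult_sum scalar_mult_eq_scaleR tri_sum1 tri_sum2 tri_sum3
        tri_scale1 tri_scale2 tri_scale3 sum_distrib_left mult_ac)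
  also have "\<dots> = (\<Sum>i\<in>UNIV. \<Sum>j\<in>UNIV. \<Sum>k\<in>UNIV. a$i * (b$j * (d$k * tri s (column i M) (column j M) (column k M))))"
    by (rule S3_321[symmetric])
  also have "\<dots> = (\<Sum>i\<in>UNIV. \<Sum>j\<in>UNIV. \<Sum>k\<in>UNIV. tri s (column i M) (column j M) (column k M) * a$i * b$j * d$k)"
    by (simp add: mult_ac)
  also have "\<dots> = tri (\<lambda>i j k. tri s (column i M) (column j M) (column k M)) a b d"
    by (simp only: tri_def[of "\<lambda>i j k. tri s (column i M) (column j M) (column k M)"])
  finally show ?thesis .
qed

lemma tri_tensor_sum: "tri (\<lambda>i j k. \<Sum>r\<in>R. f r i j k) u v w = (\<Sum>r\<in>R. tri (f r) u v w)"
proof -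
  have "tri (\<lambda>i j k. \<Sum>r\<in>R. f r i j k) u v w =
    (\<Sum>i\<in>UNIV. \<Sum>j\<in>UNIV. \<Sum>k\<in>UNIV. \<Sum>r\<in>R. f r i j k * u$i * v$j * w$k)"
    by (simp add: tri_def sum_distrib_right)
  also have "\<dots> = (\<Sum>i\<in>UNIV. \<Sum>r\<in>R. \<Sum>j\<in>UNIV. \<Sum>k\<in>UNIV. f r i j k * u$i * v$j * w$k)"
    by (rule sum.cong[OF refl], rule S3_312)
  also have "\<dots> = (\<Sum>r\<in>R. \<Sum>i\<in>UNIV. \<Sum>j\<in>UNIV. \<Sum>k\<in>UNIV. f r i j k * u$i * v$j * w$k)"
    by (rule sum.swap)
  also have "\<dots> = (\<Sum>r\<in>R. tri (f r) u v w)" by (simp add: tri_def)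
  finally show ?thesis .
qed

lemma tri_tensor_scale: "tri (\<lambda>i j k. a * f i j k) u v w = a * tri f u v w"
  by (simp add: tri_def sum_distrib_left mult_ac)

lemma tri_rank1: "tri (\<lambda>i j k. x i * y j * z k) u v w =
   (\<Sum>i\<in>UNIV. x i * u$i) * (\<Sum>j\<in>UNIV. y j * v$j) * (\<Sum>k\<in>UNIV. z k * w$k)"
proof -
  have "(\<Sum>i\<in>UNIV. x i * u$i) * (\<Sum>j\<in>UNIV. y j * v$j) * (\<Sum>k\<in>UNIV. z k * w$k) =
     (\<Sum>j\<in>UNIV. \<Sum>i\<in>UNIV. \<Sum>k\<in>UNIV. x i * (y j * (z k * (u $ i * (v $ j * w $ k)))))"
    by (simp add: sum_distrib_left sum_distrib_right mult_ac)
  also have "\<dots> = (\<Sum>i\<in>UNIV. \<Sum>j\<in>UNIV. \<Sum>k\<in>UNIV. x i * (y j * (z k * (u $ i * (v $ j * w $ k)))))"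
    by (rule S3_213[symmetric])
  also have "\<dots> = tri (\<lambda>i j k. x i * y j * z k) u v w" by (simp add: tri_def mult_ac)
  finally show ?thesis by simp
qed

definition dl :: "6 \<Rightarrow> 6 \<Rightarrow> real" where "dl i a = (if i = a then 1 else 0)"

lemma sum_dl: "(\<Sum>i\<in>UNIV. c * dl i a * f i) = c * f a"
proof -
  have "\<And>i. c * dl i a * f i = (if i = a then c * f a else 0)" by (simp add: dl_def)
  then show ?thesis by (simp add: sum.delta')
qed
lemma sum_dl1: "(\<Sum>i\<in>UNIV. dl i a * f i) = f a"
  using sum_dl[of 1 a f] by simp

lemma tri_dl: "tri (\<lambda>i j k. c * dl i a * dl j b * dl k d) u v w = c * u$a * v$b * w$d"
  by (simp only: tri_rank1 sum_dl sum_dl1)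


lemma fsum_apply: "(\<Sum>i\<in>S. f i) x = (\<Sum>i\<in>S. f i x)"
  by (induct S rule: infinite_finite_induct) simp_all

lemma S_slot1:
  fixes G :: "nat \<Rightarrow> real"
  shows "(\<Sum>r<3. \<Sum>s<3. \<Sum>t<3. G (r+s+t) * \<alpha> r * \<beta> s * \<zeta> t) =
   (\<Sum>s<3. \<Sum>t<3. (\<Sum>r<3. G (r + (s+t)) * \<alpha> r) * \<beta> s * (\<zeta> t::real))"
proof -
  have "(\<Sum>r<3. \<Sum>s<3. \<Sum>t<3. G (r+s+t) * \<alpha> r * \<beta> s * \<zeta> t) =
    (\<Sum>s<3. \<Sum>t<3. \<Sum>r<3. G (r+s+t) * \<alpha> r * \<beta> s * \<zeta> t)" by (rule S3_231)
  also have "\<dots> = (\<Sum>s<3. \<Sum>t<3. (\<Sum>r<3. G (r + (s+t)) * \<alpha> r) * \<beta> s * \<zeta> t)"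
    by (simp add: sum_distrib_left sum_distrib_right add.assoc)
  finally show ?thesis .
qed

lemma S_slot2:
  fixes G :: "nat \<Rightarrow> real"
  shows "(\<Sum>r<3. \<Sum>s<3. \<Sum>t<3. G (r+s+t) * \<alpha> r * \<beta> s * \<zeta> t) =
   (\<Sum>r<3. \<Sum>t<3. (\<Sum>s<3. G (s + (r+t)) * \<beta> s) * \<alpha> r * (\<zeta> t::real))"
proof -
  have "(\<Sum>r<3. \<Sum>s<3. \<Sum>t<3. G (r+s+t) * \<alpha> r * \<beta> s * \<zeta> t) =
    (\<Sum>r<3. \<Sum>t<3. \<Sum>s<3. G (r+s+t) * \<alpha> r * \<beta> s * \<zeta> t)" by (rule S3_132)
  also have "\<dots> = (\<Sum>r<3. \<Sum>t<3. (\<Sum>s<3. G (s + (r+t)) * \<beta> s) * \<alpha> r * \<zeta> t)"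
    by (simp add: sum_distrib_left sum_distrib_right add_ac mult_ac)
  finally show ?thesis .
qed

lemma S_slot3:
  fixes G :: "nat \<Rightarrow> real"
  shows "(\<Sum>r<3. \<Sum>s<3. \<Sum>t<3. G (r+s+t) * \<alpha> r * \<beta> s * \<zeta> t) =
   (\<Sum>r<3. \<Sum>s<3. (\<Sum>t<3. G (t + (r+s)) * \<zeta> t) * \<alpha> r * (\<beta> s::real))"
  by (simp add: sum_distrib_left sum_distrib_right add_ac mult_ac)

lemma S_perm12:
  fixes G :: "nat \<Rightarrow> real"
  shows "(\<Sum>r<3. \<Sum>s<3. \<Sum>t<3. G (r+s+t) * \<alpha> r * \<beta> s * \<zeta> t) =
   (\<Sum>r<3. \<Sum>s<3. \<Sum>t<3. G (r+s+t) * \<beta> r * \<alpha> s * (\<zeta> t::real))"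
  by (subst S3_213) (simp add: add_ac mult_ac)

lemma S_perm23:
  fixes G :: "nat \<Rightarrow> real"
  shows "(\<Sum>r<3. \<Sum>s<3. \<Sum>t<3. G (r+s+t) * \<alpha> r * \<beta> s * \<zeta> t) =
   (\<Sum>r<3. \<Sum>s<3. \<Sum>t<3. G (r+s+t) * \<alpha> r * \<zeta> s * (\<beta> t::real))"
  by (subst S3_132) (simp add: add_ac mult_ac)

context kry begin

lemma shift_sum:
  assumes q: "q < 2"
  shows "(\<Sum>r<3. g n (r + m) * co q (act A x) r) = (\<Sum>r<3. g n (r + m + 1) * co q x r)"
proof -
  have G: "g n (m + 3) = a0 * g n m + a1 * g n (m + 1) + a2 * g n (m + 2)" by (rule gm_3)
  have E: "1 + m + 1 = m + 2" "2 + m + 1 = m + 3" "1 + m = m + 1" "2 + m = m + 2" by simp_all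
  have "(\<Sum>r<3. g n (r + m) * co q (act A x) r) =
     g n m * co q (act A x) 0 + g n (m + 1) * co q (act A x) 1 + g n (m + 2) * co q (act A x) 2"
    by (simp only: sum3 add_0 E)
  also have "\<dots> = g n m * (a0 * co q x 2) + g n (m + 1) * (co q x 0 + a1 * co q x 2)
      + g n (m + 2) * (co q x 1 + a2 * co q x 2)"
    by (simp only: shift[OF q])
  also have "\<dots> = g n (m + 1) * co q x 0 + g n (m + 2) * co q x 1 + g n (m + 3) * co q x 2"
    by (simp only: G) (simp add: algebra_simps)
  also have "\<dots> = (\<Sum>r<3. g n (r + m + 1) * co q x r)"
    by (simp only: sum3 add_0 E(1) E(2))
  finally show ?thesis .
qed

definition Phi :: "nat \<Rightarrow> nat \<Rightarrow> nat \<Rightarrow> nat \<Rightarrow> real^6 \<Rightarrow> real^6 \<Rightarrow> real^6 \<Rightarrow> real" where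
  "Phi p q u n x y z = (\<Sum>r<3. \<Sum>s<3. \<Sum>t<3. g n (r+s+t) * co p x r * co q y s * co u z t)"
definition Phi1 :: "nat \<Rightarrow> nat \<Rightarrow> nat \<Rightarrow> nat \<Rightarrow> real^6 \<Rightarrow> real^6 \<Rightarrow> real^6 \<Rightarrow> real" where
  "Phi1 p q u n x y z = (\<Sum>r<3. \<Sum>s<3. \<Sum>t<3. g n (r+s+t+1) * co p x r * co q y s * co u z t)"

lemma Phi_act1: "p < 2 \<Longrightarrow> Phi p q u n (act A x) y z = Phi1 p q u n x y z"
  unfolding Phi_def Phi1_def
  by (subst (1 2) S_slot1) (simp add: shift_sum)

lemma Phi_act2: "q < 2 \<Longrightarrow> Phi p q u n x (act A y) z = Phi1 p q u n x y z"
  unfolding Phi_def Phi1_def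
  by (subst (1 2) S_slot2) (simp add: shift_sum)

lemma Phi_act3: "u < 2 \<Longrightarrow> Phi p q u n x y (act A z) = Phi1 p q u n x y z"
  unfolding Phi_def Phi1_def
  by (subst (1 2) S_slot3) (simp add: shift_sum)

lemma Phi_perm12: "Phi p q u n x x x = Phi q p u n x x x"
  unfolding Phi_def by (rule S_perm12)
lemma Phi_perm23: "Phi p q u n x x x = Phi p u q n x x x"
  unfolding Phi_def by (rule S_perm23)

definition tens :: "nat \<Rightarrow> nat \<Rightarrow> nat \<Rightarrow> nat \<Rightarrow> 6 \<Rightarrow> 6 \<Rightarrow> 6 \<Rightarrow> real" where
  "tens p q u n = (\<lambda>i j k. \<Sum>r<3. \<Sum>s<3. \<Sum>t<3. g n (r+s+t) * dl i (ix p r) * dl j (ix q s) * dl k (ix u t))"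

lemma Phi_tri: "Phi p q u n x y z = tri (tens p q u n) (Ki *v x) (Ki *v y) (Ki *v z)"
  unfolding tens_def by (simp only: tri_tensor_sum tri_dl) (simp add: Phi_def co_def)

definition chh :: "nat \<Rightarrow> nat \<Rightarrow> nat \<Rightarrow> nat \<Rightarrow> 6 \<Rightarrow> 6 \<Rightarrow> 6 \<Rightarrow> real" where
  "chh p q u n = (\<lambda>i j k. tri (tens p q u n) (column i Ki) (column j Ki) (column k Ki))"

lemma Phi_ch: "Phi p q u n x y z = tri (chh p q u n) x y z"
  unfolding Phi_tri chh_def by (rule tri_change)

lemma delta_ix: "c < 2 \<Longrightarrow> u < 2 \<Longrightarrow> t < 3 \<Longrightarrow>
  (\<Sum>t'<3. dl (ix c t) (ix u t') * F t') = (if c = u then F t else 0)"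
proof -
  assume a: "c < 2" "u < 2" "t < 3"
  have "\<And>t'. t' \<in> {..<3} \<Longrightarrow> dl (ix c t) (ix u t') * F t' = (if t' = t then (if c = u then F t else 0) else 0)"
    using ix_inj[OF a(2) a(1)] a(3) by (auto simp: dl_def)
  then have "(\<Sum>t'<3. dl (ix c t) (ix u t') * F t') = (\<Sum>t'<3. (if t' = t then (if c = u then F t else 0) else 0))"
    by (rule sum.cong[OF refl])
  also have "\<dots> = (if c = u then F t else 0)" using a(3) by (simp add: sum.delta)
  finally show ?thesis .
qed

lemma tens_val: "a < 2 \<Longrightarrow> b < 2 \<Longrightarrow> c < 2 \<Longrightarrow> p < 2 \<Longrightarrow> q < 2 \<Longrightarrow> u < 2 \<Longrightarrow>
  r < 3 \<Longrightarrow> s < 3 \<Longrightarrow> t < 3 \<Longrightarrow>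
  tens p q u n (ix a r) (ix b s) (ix c t) = (if p = a \<and> q = b \<and> u = c then g n (r+s+t) else 0)"
proof -
  assume a: "a < 2" "b < 2" "c < 2" "p < 2" "q < 2" "u < 2" "r < 3" "s < 3" "t < 3"
  have "tens p q u n (ix a r) (ix b s) (ix c t) =
    (\<Sum>r'<3. dl (ix a r) (ix p r') * (\<Sum>s'<3. dl (ix b s) (ix q s') * (\<Sum>t'<3. dl (ix c t) (ix u t') * g n (r'+s'+t'))))"
    by (simp add: tens_def sum_distrib_left mult_ac)
  also have "\<dots> = (if a = p then (if b = q then (if c = u then g n (r+s+t) else 0) else 0) else 0)"
    using a by (simp add: delta_ix)
  finally show ?thesis by auto
qed

end


definition pa1 :: "nat \<Rightarrow> nat" where "pa1 k = (if k = 3 then 1 else 0)"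
definition pa2 :: "nat \<Rightarrow> nat" where "pa2 k = (if 2 \<le> k then 1 else 0)"
definition pa3 :: "nat \<Rightarrow> nat" where "pa3 k = (if 1 \<le> k then 1 else 0)"
lemma pa_lt[simp]: "pa1 k < 2" "pa2 k < 2" "pa3 k < 2" by (simp_all add: pa1_def pa2_def pa3_def)

lemma sum4: "(\<Sum>p<4. f p) = f 0 + f 1 + f 2 + f (3::nat)"
  by (simp add: numeral_3_eq_3 numeral_2_eq_2 eval_nat_numeral)

lemma tri_diff3: "tri c u v (w - w') = tri c u v w - tri c u v w'"
  by (simp add: tri_def sum_subtractf[symmetric] algebra_simps)

context kry begin

definition hf :: "nat \<Rightarrow> nat \<Rightarrow> real^6 \<Rightarrow> real" where
  "hf k n = (\<lambda>x. Phi (pa1 k) (pa2 k) (pa3 k) n x x x)"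

lemma hf_cub: "hf k n = (\<lambda>x. tri (chh (pa1 k) (pa2 k) (pa3 k) n) x x x)"
  by (simp add: hf_def Phi_ch fun_eq_iff)

lemma hf_sol: "hf k n \<in> sol_space A"
proof -
  let ?c = "chh (pa1 k) (pa2 k) (pa3 k) n"
  have "CC A (symt ?c)"
  proof (rule tri_CC)
    fix u v w
    show "tri (symt ?c) (act A u) v w = tri (symt ?c) u (act A v) w"
      by (simp only: tri_symt Phi_ch[symmetric] Phi_act1 Phi_act2 Phi_act3 pa_lt)
  qed
  then show ?thesis unfolding sol_space_def homog_cubic_iff hf_cub
    using hesse_cond_iff[of A ?c] by blast
qed

lemma Ki_Km: "Ki *v (Kmat A *v y) = y"
  by (simp add: matrix_vector_mul_assoc Ki_left)
lemma Km_Ki: "Kmat A *v (Ki *v y) = y"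
  by (simp add: matrix_vector_mul_assoc Ki_right)

section \<open>Upper bound\<close>

lemma move1:
  assumes C: "CC A (symt c)"
  shows "tri (symt c) (pw A r x) y z = tri (symt c) x y (pw A r z)"
proof (induct r arbitrary: z)
  case 0 then show ?case by simp
next
  case (Suc r)
  have "tri (symt c) (pw A (Suc r) x) y z = tri (symt c) (act A (pw A r x)) y z" by (simp add: pw_Suc)
  also have "\<dots> = tri (symt c) (pw A r x) y (act A z)" by (rule tri_act3[OF C])
  also have "\<dots> = tri (symt c) x y (pw A r (act A z))" by (rule Suc)
  also have "\<dots> = tri (symt c) x y (pw A (Suc r) z)" by (simp add: pw_Suc')
  finally show ?case .
qed

lemma move2:
  assumes C: "CC A (symt c)"
  shows "tri (symt c) x (pw A s y) z = tri (symt c) x y (pw A s z)"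
proof -
  have "tri (symt c) x (pw A s y) z = tri (symt c) (pw A s y) x z" by (rule tri_symt_sym(1))
  also have "\<dots> = tri (symt c) y x (pw A s z)" by (rule move1[OF C])
  also have "\<dots> = tri (symt c) x y (pw A s z)" by (rule tri_symt_sym(1))
  finally show ?thesis .
qed

definition FF :: "(6 \<Rightarrow> 6 \<Rightarrow> 6 \<Rightarrow> real) \<Rightarrow> nat \<Rightarrow> nat \<Rightarrow> nat \<Rightarrow> nat \<Rightarrow> real" where
  "FF c p q u m = tri (symt c) (evec p) (evec q) (pw A m (evec u))"

lemma Tpw:
  assumes C: "CC A (symt c)"
  shows "tri (symt c) (pw A r (evec a)) (pw A s (evec b)) (pw A t (evec d)) = FF c a b d (r + s + t)"
proof -
  have "tri (symt c) (pw A r (evec a)) (pw A s (evec b)) (pw A t (evec d)) =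
     tri (symt c) (evec a) (pw A s (evec b)) (pw A r (pw A t (evec d)))" by (rule move1[OF C])
  also have "\<dots> = tri (symt c) (evec a) (evec b) (pw A s (pw A r (pw A t (evec d))))" by (rule move2[OF C])
  also have "\<dots> = FF c a b d (r + s + t)" by (simp add: FF_def pw_add[symmetric] add_ac)
  finally show ?thesis .
qed

lemma FF_rec: "FF c p q u (3 + m) = a0 * FF c p q u m + a1 * FF c p q u (1 + m) + a2 * FF c p q u (2 + m)"
proof -
  have "pw A (3 + m) (evec u) = a0 *\<^sub>R pw A m (evec u) + a1 *\<^sub>R pw A (1 + m) (evec u) + a2 *\<^sub>R pw A (2 + m) (evec u)"
    by (simp only: pw_add pw3)
  then show ?thesis by (simp add: FF_def tri_add3 tri_diff3 tri_scale3)
qed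

lemma FF_lin: "FF c p q u m = (\<Sum>n<3. g n m * FF c p q u n)"
proof (induct m rule: less_induct)
  case (less m)
  show ?case
  proof (cases "m < 3")
    case True
    then show ?thesis using lt3[OF True] by (elim disjE) (simp_all add: sum3 gm_small)
  next
    case False
    then obtain m' where m: "m = 3 + m'" by (metis add.commute le_add_diff_inverse2 not_less)
    have IH: "FF c p q u m' = (\<Sum>n<3. g n m' * FF c p q u n)"
       "FF c p q u (1 + m') = (\<Sum>n<3. g n (1 + m') * FF c p q u n)"
       "FF c p q u (2 + m') = (\<Sum>n<3. g n (2 + m') * FF c p q u n)"
      using less m by auto
    have G: "\<And>n. g n (3 + m') = a0 * g n m' + a1 * g n (1 + m') + a2 * g n (2 + m')"
      using gm_3 by (simp add: add.commute)
    show ?thesis unfolding m FF_rec IH G by (simp add: sum3 algebra_simps)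
  qed
qed

lemma Tc_eq:
  assumes C: "CC A (symt c)"
  shows "(\<lambda>i j k. tri (symt c) (column i (Kmat A)) (column j (Kmat A)) (column k (Kmat A))) =
    (\<lambda>i j k. \<Sum>p<2. \<Sum>q<2. \<Sum>u<2. \<Sum>n<3. FF c p q u n * tens p q u n i j k)"
proof (intro ext)
  fix i j k :: 6
  obtain a r where ar: "a < 2" "r < 3" "i = ix a r" using ix_surj by blast
  obtain b s where bs: "b < 2" "s < 3" "j = ix b s" using ix_surj by blast
  obtain d t where dt: "d < 2" "t < 3" "k = ix d t" using ix_surj by blast
  have "tri (symt c) (column i (Kmat A)) (column j (Kmat A)) (column k (Kmat A)) = FF c a b d (r + s + t)"
    using ar bs dt by (simp add: Kmat_col Tpw[OF C])
  also have "\<dots> = (\<Sum>n<3. g n (r + s + t) * FF c a b d n)" by (rule FF_lin)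
  also have "\<dots> = (\<Sum>p<2. \<Sum>q<2. \<Sum>u<2. \<Sum>n<3. FF c p q u n * tens p q u n i j k)"
    using ar bs dt by (auto dest!: lt2 simp: tens_val sum2 mult.commute)
  finally show "tri (symt c) (column i (Kmat A)) (column j (Kmat A)) (column k (Kmat A)) =
    (\<Sum>p<2. \<Sum>q<2. \<Sum>u<2. \<Sum>n<3. FF c p q u n * tens p q u n i j k)" .
qed

lemma Phi_hf: "p < 2 \<Longrightarrow> q < 2 \<Longrightarrow> u < 2 \<Longrightarrow> Phi p q u n x x x = hf (p + q + u) n x"
  by (auto dest!: lt2 simp: hf_def pa1_def pa2_def pa3_def intro: Phi_perm12 Phi_perm23
       Phi_perm12[THEN trans, OF Phi_perm23] Phi_perm23[THEN trans, OF Phi_perm12])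

lemma upper:
  assumes H: "H \<in> sol_space A"
  shows "\<exists>F. H = (\<lambda>x. \<Sum>p<2. \<Sum>q<2. \<Sum>u<2. \<Sum>n<3. F p q u n * hf (p + q + u) n x)"
proof -
  obtain c where Hc: "H = (\<lambda>x. tri c x x x)" and C0: "\<forall>x. A ** hesse H x = hesse H x ** transpose A"
    using H unfolding sol_space_def homog_cubic_iff by blast
  have C: "CC A (symt c)" using C0 hesse_cond_iff[of A c] Hc by simp
  have Hx: "\<And>x. H x = (\<Sum>p<2. \<Sum>q<2. \<Sum>u<2. \<Sum>n<3. (FF c p q u n / 6) * hf (p + q + u) n x)"
  proof -
    fix x
    let ?y = "Ki *v x"
    have "H x = tri (symt c) x x x / 6" using tri_symt[of c x x x] Hc by simp
    also have "tri (symt c) x x x = tri (symt c) (Kmat A *v ?y) (Kmat A *v ?y) (Kmat A *v ?y)"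
      by (simp add: Km_Ki)
    also have "\<dots> = tri (\<lambda>i j k. \<Sum>p<2. \<Sum>q<2. \<Sum>u<2. \<Sum>n<3. FF c p q u n * tens p q u n i j k) ?y ?y ?y"
      by (simp only: tri_change Tc_eq[OF C])
    also have "\<dots> = (\<Sum>p<2. \<Sum>q<2. \<Sum>u<2. \<Sum>n<3. FF c p q u n * tri (tens p q u n) ?y ?y ?y)"
      by (simp only: tri_tensor_sum tri_tensor_scale)
    also have "\<dots> = (\<Sum>p<2. \<Sum>q<2. \<Sum>u<2. \<Sum>n<3. FF c p q u n * hf (p + q + u) n x)"
      by (intro sum.cong refl) (simp add: Phi_tri[symmetric] Phi_hf)
    finally show "H x = (\<Sum>p<2. \<Sum>q<2. \<Sum>u<2. \<Sum>n<3. (FF c p q u n / 6) * hf (p + q + u) n x)"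
      by (simp add: sum_divide_distrib)
  qed
  have "H = (\<lambda>x. \<Sum>p<2. \<Sum>q<2. \<Sum>u<2. \<Sum>n<3. (FF c p q u n / 6) * hf (p + q + u) n x)"
    by (rule ext, rule Hx)
  then show ?thesis by (intro exI[where x="\<lambda>p q u n. FF c p q u n / 6"]) simp
qed

end


lemma symt_sum: "symt (\<lambda>i j l. \<Sum>k\<in>K. \<Sum>n\<in>N. f k n * T k n i j l) i j l =
  (\<Sum>k\<in>K. \<Sum>n\<in>N. f k n * symt (T k n) i j l)"
  by (simp add: symt_def sum.distrib distrib_left)

lemma symt_zero: "symt (\<lambda>_ _ _. 0) = (\<lambda>_ _ _. 0)"
  by (simp add: symt_def fun_eq_iff)

lemma cubic_zero_symt:
  assumes "\<And>y. tri S y y y = 0"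
  shows "symt S i j l = 0"
proof -
  have "(\<lambda>y. tri S y y y) = (\<lambda>y. tri (\<lambda>_ _ _. 0) y y y)"
    using assms by (simp add: fun_eq_iff tri_def)
  then have "hesse (\<lambda>y. tri S y y y) (axis l 1) $ i $ j = hesse (\<lambda>y. tri (\<lambda>_ _ _. 0) y y y) (axis l 1) $ i $ j"
    by simp
  then show ?thesis by (simp only: hesse_cub tri_axis3 symt_zero)
qed

context kry begin

lemma indep:
  assumes Z: "\<And>x. (\<Sum>k<4. \<Sum>n<3. \<alpha> k n * hf k n x) = 0"
  shows "k0 < 4 \<Longrightarrow> n0 < 3 \<Longrightarrow> \<alpha> k0 n0 = 0"
proof -
  define S where "S = (\<lambda>i j l. \<Sum>k<4. \<Sum>n<3. \<alpha> k n * tens (pa1 k) (pa2 k) (pa3 k) n i j l)"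
  have S0: "\<And>y. tri S y y y = 0"
  proof -
    fix y
    have "tri S y y y = (\<Sum>k<4. \<Sum>n<3. \<alpha> k n * tri (tens (pa1 k) (pa2 k) (pa3 k) n) y y y)"
      unfolding S_def by (simp only: tri_tensor_sum tri_tensor_scale)
    also have "\<dots> = (\<Sum>k<4. \<Sum>n<3. \<alpha> k n * hf k n (Kmat A *v y))"
      by (simp add: hf_def Phi_tri Ki_Km)
    also have "\<dots> = 0" by (rule Z)
    finally show "tri S y y y = 0" .
  qed
  have SS: "\<And>i j l. (\<Sum>k<4. \<Sum>n<3. \<alpha> k n * symt (tens (pa1 k) (pa2 k) (pa3 k) n) i j l) = 0"
    using cubic_zero_symt[OF S0] unfolding S_def symt_sum by blast
  assume k0: "k0 < 4" and n0: "n0 < 3"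
  have "k0 = 0 \<or> k0 = 1 \<or> k0 = 2 \<or> k0 = 3" using k0 by auto
  then show "\<alpha> k0 n0 = 0"
    using SS[of "ix (pa1 k0) 0" "ix (pa2 k0) 0" "ix (pa3 k0) n0"] lt3[OF n0]
    by (elim disjE; simp add: symt_def tens_val pa1_def pa2_def pa3_def sum4 sum3 gm_small)
qed

end


lemma fun_vs: "vector_space (\<lambda>(c::real) (f::real^6 \<Rightarrow> real) x. c * f x)"
  by unfold_locales (simp_all add: fun_eq_iff algebra_simps)

context kry begin

lemma dim12: "fun_dim (sol_space A) = 12"
proof -
  interpret V: vector_space "\<lambda>(c::real) (f::real^6 \<Rightarrow> real) x. c * f x" by (rule fun_vs)
  define I where "I = {..<4::nat} \<times> {..<3::nat}"
  define hh where "hh = (\<lambda>(k, n). hf k n)"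
  define B where "B = hh ` I"
  have finI: "finite I" by (simp add: I_def)
  have sumI: "\<And>f. (\<Sum>i\<in>I. f i) = (\<Sum>k<4. \<Sum>n<3. f (k, n))"
    unfolding I_def by (simp add: sum.cartesian_product)
  have indI: "\<And>\<beta> i. (\<And>x. (\<Sum>j\<in>I. \<beta> j * hh j x) = 0) \<Longrightarrow> i \<in> I \<Longrightarrow> \<beta> i = 0"
  proof -
    fix \<beta> :: "nat \<times> nat \<Rightarrow> real" and i
    assume Z: "\<And>x. (\<Sum>j\<in>I. \<beta> j * hh j x) = 0" and i: "i \<in> I"
    have Z': "\<And>x. (\<Sum>k<4. \<Sum>n<3. (\<lambda>k n. \<beta> (k, n)) k n * hf k n x) = 0"
      using Z by (simp add: sumI hh_def)
    obtain k n where "i = (k, n)" "k < 4" "n < 3" using i unfolding I_def by auto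
    then show "\<beta> i = 0" using indep[OF Z', of k n] by simp
  qed
  have inj: "inj_on hh I"
  proof (rule inj_onI)
    fix a b assume a: "a \<in> I" and b: "b \<in> I" and e: "hh a = hh b"
    show "a = b"
    proof (rule ccontr)
      assume ne: "a \<noteq> b"
      define \<beta> where "\<beta> = (\<lambda>j. (if j = a then 1 else 0) - (if j = b then (1::real) else 0))"
      have "\<And>x. (\<Sum>j\<in>I. \<beta> j * hh j x) = 0"
      proof -
        fix x
        have P: "\<And>j. \<beta> j * hh j x = (if j = a then hh a x else 0) - (if j = b then hh b x else 0)"
          unfolding \<beta>_def by auto
        have "(\<Sum>j\<in>I. \<beta> j * hh j x) = (\<Sum>j\<in>I. (if j = a then hh a x else 0) - (if j = b then hh b x else 0))"
          by (simp only: P)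
        also have "\<dots> = (\<Sum>j\<in>I. (if j = a then hh a x else 0)) - (\<Sum>j\<in>I. (if j = b then hh b x else 0))"
          by (rule sum_subtractf)
        also have "\<dots> = 0" using a b e finI by (simp add: sum.delta)
        finally show "(\<Sum>j\<in>I. \<beta> j * hh j x) = 0" .
      qed
      then have "\<beta> a = 0" using indI a by blast
      then show False using ne unfolding \<beta>_def by simp
    qed
  qed
  have BS: "B \<subseteq> sol_space A"
    unfolding B_def hh_def using hf_sol by auto
  have SB: "sol_space A \<subseteq> V.span B"
  proof
    fix H assume "H \<in> sol_space A"
    then obtain F where HF: "H = (\<lambda>x. \<Sum>p<2. \<Sum>q<2. \<Sum>u<2. \<Sum>n<3. F p q u n * hf (p + q + u) n x)"
      using upper by blast
    have "H = (\<Sum>p<2. \<Sum>q<2. \<Sum>u<2. \<Sum>n<3. (\<lambda>x. F p q u n * hf (p + q + u) n x))"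
      unfolding HF by (simp add: fun_eq_iff fsum_apply)
    also have "\<dots> \<in> V.span B"
    proof (intro V.span_sum)
      fix p q u n assume "p \<in> {..<2::nat}" "q \<in> {..<2::nat}" "u \<in> {..<2::nat}" "n \<in> {..<3::nat}"
      then have "hf (p + q + u) n \<in> B" unfolding B_def hh_def I_def
        by (auto intro!: image_eqI[where x="(p + q + u, n)"])
      then have "(\<lambda>x. F p q u n * hf (p + q + u) n x) \<in> V.span B"
        using V.span_scale[OF V.span_base, of "hf (p + q + u) n" B "F p q u n"] by simp
      then show "(\<lambda>x. F p q u n * hf (p + q + u) n x) \<in> V.span B" .
    qed
    finally show "H \<in> V.span B" .
  qed
  have indB: "V.independent B"
  proof (rule V.independent_if_scalars_zero)
    show "finite B" unfolding B_def using finI by simp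
  next
    fix f :: "(real^6 \<Rightarrow> real) \<Rightarrow> real" and v
    assume Z: "(\<Sum>x\<in>B. (\<lambda>x'. f x * x x')) = 0" and v: "v \<in> B"
    obtain i where i: "i \<in> I" "v = hh i" using v unfolding B_def by auto
    have "\<And>x. (\<Sum>j\<in>I. f (hh j) * hh j x) = 0"
    proof -
      fix x
      have "(\<Sum>j\<in>I. f (hh j) * hh j x) = (\<Sum>y\<in>B. (\<lambda>x'. f y * y x')) x"
        unfolding B_def fsum_apply by (simp add: sum.reindex[OF inj])
      then show "(\<Sum>j\<in>I. f (hh j) * hh j x) = 0" using Z by simp
    qed
    then have "f (hh i) = 0" using indI[of "\<lambda>j. f (hh j)"] i by blast
    then show "f v = 0" using i by simp
  qed
  have cardB: "card B = 12"
    unfolding B_def using card_image[OF inj] by (simp add: I_def)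
  show ?thesis unfolding fun_dim_def
    by (rule V.dim_unique[OF BS SB indB cardB])
qed

end


lemma mp_sum: "(\<And>x. x \<in> S \<Longrightarrow> matrix_poly (f x)) \<Longrightarrow> matrix_poly (\<lambda>A. \<Sum>x\<in>S. f x A)"
proof (induct S rule: infinite_finite_induct)
  case (infinite S) then show ?case using matrix_poly.const[of 0] by simp
next
  case empty then show ?case using matrix_poly.const[of 0] by simp
next
  case (insert x F)
  then have "matrix_poly (\<lambda>A. f x A + (\<Sum>x\<in>F. f x A))"
    by (intro matrix_poly.add) auto
  then show ?case using insert by simp
qed

lemma mp_prod: "(\<And>x. x \<in> S \<Longrightarrow> matrix_poly (f x)) \<Longrightarrow> matrix_poly (\<lambda>A. \<Prod>x\<in>S. f x A)"
proof (induct S rule: infinite_finite_induct)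
  case (infinite S) then show ?case using matrix_poly.const[of 1] by simp
next
  case empty then show ?case using matrix_poly.const[of 1] by simp
next
  case (insert x F)
  then have "matrix_poly (\<lambda>A. f x A * (\<Prod>x\<in>F. f x A))"
    by (intro matrix_poly.mult) auto
  then show ?case using insert by simp
qed

lemma mp_pw: "matrix_poly (\<lambda>A. pw A m u $ i)"
proof (induct m arbitrary: i)
  case 0 then show ?case using matrix_poly.const[of "u $ i"] by simp
next
  case (Suc m)
  have "matrix_poly (\<lambda>A. \<Sum>j\<in>UNIV. A $ j $ i * pw A m u $ j)"
    by (intro mp_sum matrix_poly.mult matrix_poly.entry Suc)
  then show ?case by (simp add: pw_Suc act_comp)
qed

lemma mp_det: "matrix_poly (\<lambda>A. det (Kmat A))"
proof -
  have "matrix_poly (\<lambda>A. \<Sum>p\<in>{p. p permutes (UNIV::6 set)}. of_int (sign p) * (\<Prod>i\<in>UNIV. Kmat A $ i $ p i))"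
    by (intro mp_sum matrix_poly.mult matrix_poly.const mp_prod) (simp add: Kmat_def mp_pw)
  then show ?thesis by (simp add: det_def)
qed

definition A0 :: "real^6^6" where
  "A0 = (\<chi> i j. if (idx i, idx j) \<in> {(0,1),(1,0),(1,2),(2,1),(3,4),(4,3),(4,5),(5,4)} then 1 else 0)"

lemma A0_skew: "skew_hamiltonian A0"
  unfolding skew_hamiltonian_def vec_eq_iff forall_6
  by (simp add: matrix_matrix_mult_def transpose_def Jmat_vals sum_6 A0_def)

definition Kc :: "real^6^6" where
  "Kc = (\<chi> i j. if idx i = idx j \<or> (idx i, idx j) \<in> {(0,2),(3,5)} then 1 else 0)"
definition Nc :: "real^6^6" where
  "Nc = (\<chi> i j. if idx i = idx j then 1 else if (idx i, idx j) \<in> {(0,2),(3,5)} then -1 else 0)"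

lemma act_A0: "act A0 u = (\<chi> l. if l = 0 then u$1 else if l = 1 then u$0 + u$2 else if l = 2 then u$1
   else if l = 3 then u$4 else if l = 4 then u$3 + u$5 else u$4)"
  unfolding vec_eq_iff forall_6 by (simp add: act_comp sum_6 A0_def)

lemma Kmat_A0: "Kmat A0 = Kc"
  unfolding vec_eq_iff forall_6
  by (simp add: Kmat_def Kc_def evec_def numeral_2_eq_2 pw_Suc act_A0 axis_def)

lemma det_A0: "det (Kmat A0) \<noteq> 0"
proof -
  have "Nc ** Kc = mat 1"
    unfolding vec_eq_iff forall_6
    by (simp add: matrix_matrix_mult_def sum_6 Nc_def Kc_def mat_def)
  then have "invertible Kc" using invertible_left_inverse by blast
  then show ?thesis unfolding Kmat_A0 using invertible_det_nz by blast
qed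

theorem mainTheorem2:
  shows "\<exists>p. matrix_poly p \<and> (\<exists>A. skew_hamiltonian A \<and> p A \<noteq> 0) \<and>
           (\<forall>A. skew_hamiltonian A \<and> p A \<noteq> 0 \<longrightarrow> fun_dim (sol_space A) = 12)"
proof (intro exI[of _ "\<lambda>A. det (Kmat A)"] conjI allI impI)
  show "matrix_poly (\<lambda>A. det (Kmat A))" by (rule mp_det)
  show "\<exists>A. skew_hamiltonian A \<and> det (Kmat A) \<noteq> 0" using A0_skew det_A0 by blast
  fix A assume "skew_hamiltonian A \<and> det (Kmat A) \<noteq> 0"
  then interpret kry A by unfold_locales auto
  show "fun_dim (sol_space A) = 12" by (rule dim12)
qed


end
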